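(* Let $K\ge2$. The capacity region of the $K$-receiver combination network with nested messages $M_{\overline{K}}$ (required by receivers $[1:K-1]$) and $M_{[1:K]}$ (required by all receivers) is the set of rate pairs $(R_{\overline{K}},R_{[1:K]})$ with $R_{[1:K]}\le C_{\mathsf{W}_K^{\mathsf{P}}}$ and $R_{[1:K]}+R_{\overline{K}}\le C_{\mathsf{W}_j^{\mathsf{P}}}$ for all $j\in[1:K-1]$.
   Context: The $K$-receiver combination network with capacities $C_S\ge0$, $S\in\mathsf{P}$ ($\mathsf{P}$ = nonempty subsets of $[1:K]$): deterministic broadcast channel with input $X=(V_S:S\in\mathsf{P})$, $|\mathcal{V}_S|=2^{C_S}$, and outputs $Y_i=(V_S:S\in\mathsf{W}_i^{\mathsf{P}})$ where $\mathsf{W}_i^{\mathsf{P}}=\{T\in\mathsf{P}:i\in T\}$. Messages independent, each required by the indicated receivers; achievability and capacity region as usual. $C_{\mathsf{W}}=\sum_{S\in\mathsf{W}}C_S$; $\overline{K}$ denotes $[1:K]\setminus\{K\}$. *)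

theory Defs
  imports "HOL-Analysis.Analysis"
begin

text \<open>Receivers are 1..K, links are indexed by
the nonempty subsets S of {1..K}. Link S carries one symbol of an alphabet of size
2 powr C S per channel use; over a block of n channel uses it therefore carries one
symbol from an alphabet of size (2 powr C S)^n, encoded as a natural number below that.\<close>

definition links :: "nat \<Rightarrow> nat set set" where
  "links K = {S. S \<subseteq> {1..K} \<and> S \<noteq> {}}"

definition W :: "nat \<Rightarrow> nat \<Rightarrow> nat set set" where
  "W K i = {T \<in> links K. i \<in> T}"

definition capW :: "(nat set \<Rightarrow> real) \<Rightarrow> nat set set \<Rightarrow> real" where
  "capW C Ws = (\<Sum>S\<in>Ws. C S)"

definition blk_alph :: "(nat set \<Rightarrow> real) \<Rightarrow> nat \<Rightarrow> nat set \<Rightarrow> nat" where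
  "blk_alph C n S = nat \<lfloor>2 powr C S\<rfloor> ^ n"

definition msg_size :: "nat \<Rightarrow> real \<Rightarrow> nat" where
  "msg_size n R = nat \<lceil>2 powr (real n * R)\<rceil>"

definition rx_out :: "nat \<Rightarrow> (nat set \<Rightarrow> nat \<Rightarrow> nat \<Rightarrow> nat) \<Rightarrow> nat \<Rightarrow> nat \<Rightarrow> nat \<Rightarrow> (nat set \<Rightarrow> nat)" where
  "rx_out K enc j a b = (\<lambda>S. if S \<in> W K j then enc S a b else 0)"

text \<open>A code of block length n for the nested message set: message a (=M_{Kbar}, wanted by
receivers 1..K-1) ranges over {0..<m1}, message b (=M_{[1:K]}, wanted by everyone) over {0..<m2}.
enc S a b is the block transmitted on link S. dec j maps receiver j's output to an estimate
(a', b'); receiver K only uses the second component.\<close>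
definition valid_encoder :: "nat \<Rightarrow> (nat set \<Rightarrow> real) \<Rightarrow> nat \<Rightarrow> nat \<Rightarrow> nat \<Rightarrow> (nat set \<Rightarrow> nat \<Rightarrow> nat \<Rightarrow> nat) \<Rightarrow> bool" where
  "valid_encoder K C n m1 m2 enc \<longleftrightarrow>
     (\<forall>S\<in>links K. \<forall>a<m1. \<forall>b<m2. enc S a b < blk_alph C n S)"

definition error_event :: "nat \<Rightarrow> (nat set \<Rightarrow> nat \<Rightarrow> nat \<Rightarrow> nat) \<Rightarrow> (nat \<Rightarrow> (nat set \<Rightarrow> nat) \<Rightarrow> nat \<times> nat) \<Rightarrow> nat \<Rightarrow> nat \<Rightarrow> bool" where
  "error_event K enc dec a b \<longleftrightarrow>
     (\<exists>j\<in>{1..<K}. dec j (rx_out K enc j a b) \<noteq> (a, b)) \<or> snd (dec K (rx_out K enc K a b)) \<noteq> b"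

definition error_prob :: "nat \<Rightarrow> nat \<Rightarrow> nat \<Rightarrow> (nat set \<Rightarrow> nat \<Rightarrow> nat \<Rightarrow> nat) \<Rightarrow> (nat \<Rightarrow> (nat set \<Rightarrow> nat) \<Rightarrow> nat \<times> nat) \<Rightarrow> real" where
  "error_prob K m1 m2 enc dec =
     real (card {(a, b). a < m1 \<and> b < m2 \<and> error_event K enc dec a b}) / (real m1 * real m2)"

text \<open>(R1, R2) = (R_{Kbar}, R_{[1:K]}) is achievable if both rates are nonnegative and there is a
sequence of (2^{nR1}, 2^{nR2}, n) codes whose error probability tends to 0.\<close>
definition achievable :: "nat \<Rightarrow> (nat set \<Rightarrow> real) \<Rightarrow> real \<times> real \<Rightarrow> bool" where
  "achievable K C R \<longleftrightarrow> fst R \<ge> 0 \<and> snd R \<ge> 0 \<and>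
     (\<exists>Pe :: nat \<Rightarrow> real. Pe \<longlonglongrightarrow> 0 \<and>
        (\<forall>n. \<exists>enc dec. valid_encoder K C n (msg_size n (fst R)) (msg_size n (snd R)) enc \<and>
             error_prob K (msg_size n (fst R)) (msg_size n (snd R)) enc dec \<le> Pe n))"

definition capacity_region :: "nat \<Rightarrow> (nat set \<Rightarrow> real) \<Rightarrow> (real \<times> real) set" where
  "capacity_region K C = closure {R. achievable K C R}"

end

theory Submission
  imports Defs
begin



definition Qs :: "(nat set \<Rightarrow> nat) \<Rightarrow> nat set set \<Rightarrow> nat" where
  "Qs al Ws = (\<Prod>S\<in>Ws. al S)"

definition Ecl :: "nat set set \<Rightarrow> (nat set \<Rightarrow> nat) \<Rightarrow> nat set set \<Rightarrow> (nat set \<Rightarrow> nat) \<Rightarrow> (nat set \<Rightarrow> nat) set" where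
  "Ecl I al T y = {x \<in> PiE I (\<lambda>S. {..<al S}). \<forall>S\<in>T. x S = y S}"

lemma card_Ecl_le:
  assumes "finite I" "T \<subseteq> I"
  shows "card (Ecl I al T y) \<le> Qs al (I - T)"
proof -
  have inj: "inj_on (\<lambda>x. restrict x (I - T)) (Ecl I al T y)"
  proof (rule inj_onI)
    fix x z assume x: "x \<in> Ecl I al T y" and z: "z \<in> Ecl I al T y"
      and e: "restrict x (I - T) = restrict z (I - T)"
    show "x = z"
    proof
      fix S
      show "x S = z S"
      proof (cases "S \<in> I")
        case True
        then show ?thesis
        proof (cases "S \<in> T")
          case True then show ?thesis using x z unfolding Ecl_def by auto
        next
          case False then show ?thesis using e \<open>S \<in> I\<close> by (metis Diff_iff restrict_apply')
        qed
      next
        case False then show ?thesis using x z unfolding Ecl_def PiE_def extensional_def by auto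
      qed
    qed
  qed
  have sub: "(\<lambda>x. restrict x (I - T)) ` (Ecl I al T y) \<subseteq> PiE (I - T) (\<lambda>S. {..<al S})"
    unfolding Ecl_def by auto
  have "card (Ecl I al T y) \<le> card (PiE (I - T) (\<lambda>S. {..<al S}))"
    by (rule card_inj_on_le[OF inj sub]) (simp add: assms finite_PiE)
  also have "\<dots> = Qs al (I - T)" unfolding Qs_def using assms by (simp add: card_PiE)
  finally show ?thesis .
qed

lemma card_Ecl_eq:
  assumes "finite I" "T \<subseteq> I" "\<forall>S\<in>T. y S < al S"
  shows "card (Ecl I al T y) = Qs al (I - T)"
proof (rule antisym[OF card_Ecl_le[OF assms(1,2)]])
  have sub: "(\<lambda>z S. if S \<in> T then y S else z S) ` PiE (I - T) (\<lambda>S. {..<al S}) \<subseteq> Ecl I al T y"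
    using assms unfolding Ecl_def PiE_def extensional_def by (auto simp: Pi_def)
  have inj: "inj_on (\<lambda>z S. if S \<in> T then y S else z S) (PiE (I - T) (\<lambda>S. {..<al S}))"
  proof (rule inj_onI)
    fix x z assume x: "x \<in> PiE (I - T) (\<lambda>S. {..<al S})" and z: "z \<in> PiE (I - T) (\<lambda>S. {..<al S})"
      and e: "(\<lambda>S. if S \<in> T then y S else x S) = (\<lambda>S. if S \<in> T then y S else z S)"
    show "x = z"
    proof
      fix S show "x S = z S"
      proof (cases "S \<in> T")
        case True then show ?thesis using x z unfolding PiE_def extensional_def by auto
      next
        case False then show ?thesis using fun_cong[OF e, of S] by simp
      qed
    qed
  qed
  have "Qs al (I - T) = card (PiE (I - T) (\<lambda>S. {..<al S}))"
    unfolding Qs_def using assms by (simp add: card_PiE)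
  also have "\<dots> \<le> card (Ecl I al T y)"
    by (rule card_inj_on_le[OF inj sub]) (simp add: Ecl_def assms finite_PiE)
  finally show "Qs al (I - T) \<le> card (Ecl I al T y)" .
qed

lemma greedy:
  fixes Allow :: "nat \<Rightarrow> 'a set" and Bad :: "nat \<Rightarrow> (nat \<Rightarrow> 'a) \<Rightarrow> 'a set"
  assumes loc: "\<And>i f g. (\<And>k. k < i \<Longrightarrow> f k = g k) \<Longrightarrow> Bad i f = Bad i g"
    and ex: "\<And>i f. i < N \<Longrightarrow> (\<And>k. k < i \<Longrightarrow> f k \<in> Allow k - Bad k f) \<Longrightarrow> \<exists>x. x \<in> Allow i - Bad i f"
  shows "\<exists>f. \<forall>i<N. f i \<in> Allow i - Bad i f"
  using ex
proof (induction N)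
  case 0 then show ?case by auto
next
  case (Suc N)
  have "\<exists>f. \<forall>i<N. f i \<in> Allow i - Bad i f"
    by (rule Suc.IH) (rule Suc.prems, simp_all)
  then obtain f where f: "\<forall>i<N. f i \<in> Allow i - Bad i f" by blast
  obtain x where x: "x \<in> Allow N - Bad N f" using Suc.prems[of N f] f by blast
  let ?g = "f(N := x)"
  have "\<forall>i<Suc N. ?g i \<in> Allow i - Bad i ?g"
  proof (intro allI impI)
    fix i assume "i < Suc N"
    have "Bad i ?g = Bad i f" using \<open>i < Suc N\<close> by (intro loc) auto
    then show "?g i \<in> Allow i - Bad i ?g" using f x \<open>i < Suc N\<close>
      by (cases "i = N") auto
  qed
  then show ?case by blast
qed




lemma card_same_mod_le:
  fixes L :: nat assumes "L \<ge> 1"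
  shows "card {k'. k' < k \<and> k' mod L = k mod L} \<le> k div L"
proof -
  have "{k'. k' < k \<and> k' mod L = k mod L} \<subseteq> (\<lambda>i. k mod L + L * i) ` {..< k div L}"
  proof
    fix k' assume h: "k' \<in> {k'. k' < k \<and> k' mod L = k mod L}"
    then have lt: "k' < k" and md: "k' mod L = k mod L" by auto
    have e1: "k' = k mod L + L * (k' div L)" using md by (metis mod_mult_div_eq add.commute mult.commute)
    have e2: "k = k mod L + L * (k div L)" by (metis mod_mult_div_eq add.commute mult.commute)
    have "k' div L < k div L"
    proof (rule ccontr)
      assume "\<not> k' div L < k div L"
      then have "L * (k div L) \<le> L * (k' div L)" by simp
      then show False using lt e1 e2 by linarith
    qed
    then show "k' \<in> (\<lambda>i. k mod L + L * i) ` {..< k div L}" using e1 by blast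
  qed
  then have "card {k'. k' < k \<and> k' mod L = k mod L} \<le> card ((\<lambda>i. k mod L + L * i) ` {..< k div L})"
    by (rule card_mono[rotated]) simp
  also have "\<dots> \<le> k div L" using card_image_le[of "{..< k div L}"] by simp
  finally show ?thesis .
qed

lemma card_UN_le_const:
  assumes "finite A" "\<And>a. a \<in> A \<Longrightarrow> card (B a) \<le> c" "\<And>a. a \<in> A \<Longrightarrow> finite (B a)"
  shows "card (\<Union>a\<in>A. B a) \<le> card A * c"
proof -
  have "card (\<Union>a\<in>A. B a) \<le> (\<Sum>a\<in>A. card (B a))" by (rule card_UN_le[OF assms(1)])
  also have "\<dots> \<le> (\<Sum>a\<in>A. c)" by (rule sum_mono) (rule assms(2))
  finally show ?thesis by simp
qed

lemma finite_Ecl: "finite I \<Longrightarrow> finite (Ecl I al T y)"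
  unfolding Ecl_def by (simp add: finite_PiE)

lemma stage1:
  fixes I :: "nat set set" and al :: "nat set \<Rightarrow> nat" and WK :: "nat set set"
    and T :: "nat \<Rightarrow> nat set set" and J :: "nat set" and L :: "nat \<Rightarrow> nat" and Nc :: nat
  assumes fI: "finite I" and WKI: "WK \<subseteq> I" and TI: "\<forall>j\<in>J. T j \<subseteq> I" and fJ: "finite J"
    and L1: "\<forall>j\<in>J. L j \<ge> 1"
    and cond: "(Nc - 1) * Qs al (I - WK) + (\<Sum>j\<in>J. ((Nc - 1) div L j) * Qs al (I - T j)) < Qs al I"
  shows "\<exists>u. (\<forall>k<Nc. u k \<in> PiE I (\<lambda>S. {..<al S})) \<and>
    (\<forall>k<Nc. \<forall>k'<Nc. k \<noteq> k' \<longrightarrow> (\<exists>S\<in>WK. u k S \<noteq> u k' S)) \<and>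
    (\<forall>j\<in>J. \<forall>k<Nc. \<forall>k'<Nc. k \<noteq> k' \<and> k mod L j = k' mod L j \<longrightarrow> (\<exists>S\<in>T j. u k S \<noteq> u k' S))"
proof -
  define X where "X = PiE I (\<lambda>S. {..<al S})"
  define Bad where "Bad = (\<lambda>k f. (\<Union>k'\<in>{..<k}. Ecl I al WK (f k')) \<union>
      (\<Union>j\<in>J. \<Union>k'\<in>{k'. k' < k \<and> k' mod L j = k mod L j}. Ecl I al (T j) (f k')))"
  have "\<exists>f. \<forall>i<Nc. f i \<in> (\<lambda>_. X) i - Bad i f"
  proof (rule greedy)
    fix i and f g :: "nat \<Rightarrow> nat set \<Rightarrow> nat" assume "\<And>k. k < i \<Longrightarrow> f k = g k"
    then show "Bad i f = Bad i g" unfolding Bad_def by auto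
  next
    fix i and f :: "nat \<Rightarrow> nat set \<Rightarrow> nat" assume i: "i < Nc"
    have fB: "finite (Bad i f)" unfolding Bad_def using fJ by (auto intro!: finite_Ecl fI)
    have c1: "card (\<Union>k'\<in>{..<i}. Ecl I al WK (f k')) \<le> (Nc - 1) * Qs al (I - WK)"
    proof -
      have "card (\<Union>k'\<in>{..<i}. Ecl I al WK (f k')) \<le> card {..<i} * Qs al (I - WK)"
        by (rule card_UN_le_const) (auto intro: card_Ecl_le[OF fI WKI] finite_Ecl[OF fI])
      also have "\<dots> \<le> (Nc - 1) * Qs al (I - WK)" using i by (intro mult_right_mono) auto
      finally show ?thesis .
    qed
    have c2: "card (\<Union>k'\<in>{k'. k' < i \<and> k' mod L j = i mod L j}. Ecl I al (T j) (f k'))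
        \<le> ((Nc - 1) div L j) * Qs al (I - T j)" if j: "j \<in> J" for j
    proof -
      have "card (\<Union>k'\<in>{k'. k' < i \<and> k' mod L j = i mod L j}. Ecl I al (T j) (f k'))
          \<le> card {k'. k' < i \<and> k' mod L j = i mod L j} * Qs al (I - T j)"
        by (rule card_UN_le_const) (use j TI in \<open>auto intro: card_Ecl_le[OF fI] finite_Ecl[OF fI]\<close>)
      also have "\<dots> \<le> (i div L j) * Qs al (I - T j)"
        using card_same_mod_le[of "L j" i] L1 j by (simp add: mult_right_mono)
      also have "\<dots> \<le> ((Nc - 1) div L j) * Qs al (I - T j)"
        using i by (intro mult_right_mono div_le_mono) auto
      finally show ?thesis .
    qed
    have "card (Bad i f) \<le> card (\<Union>k'\<in>{..<i}. Ecl I al WK (f k')) +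
        card (\<Union>j\<in>J. \<Union>k'\<in>{k'. k' < i \<and> k' mod L j = i mod L j}. Ecl I al (T j) (f k'))"
      unfolding Bad_def by (rule card_Un_le)
    also have "card (\<Union>j\<in>J. \<Union>k'\<in>{k'. k' < i \<and> k' mod L j = i mod L j}. Ecl I al (T j) (f k'))
        \<le> (\<Sum>j\<in>J. card (\<Union>k'\<in>{k'. k' < i \<and> k' mod L j = i mod L j}. Ecl I al (T j) (f k')))"
      by (rule card_UN_le[OF fJ])
    also have "\<dots> \<le> (\<Sum>j\<in>J. ((Nc - 1) div L j) * Qs al (I - T j))"
      by (rule sum_mono) (rule c2)
    finally have "card (Bad i f) < Qs al I" using c1 cond by linarith
    also have "Qs al I = card X" unfolding X_def Qs_def using fI by (simp add: card_PiE)
    finally have "card (Bad i f) < card X" .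
    then have "\<not> X \<subseteq> Bad i f" using fB card_mono by (metis not_le)
    then show "\<exists>x. x \<in> (\<lambda>_. X) i - Bad i f" by blast
  qed
  then obtain f where f: "\<forall>i<Nc. f i \<in> X - Bad i f" by auto
  have p1: "\<exists>S\<in>WK. f k S \<noteq> f k' S" if "k < Nc" "k' < k" for k k'
  proof (rule ccontr)
    assume "\<not> ?thesis"
    then have "f k \<in> Ecl I al WK (f k')" using f that unfolding Ecl_def X_def by auto
    then show False using f that unfolding Bad_def by auto
  qed
  have p2: "\<exists>S\<in>T j. f k S \<noteq> f k' S" if "j \<in> J" "k < Nc" "k' < k" "k' mod L j = k mod L j" for j k k'
  proof (rule ccontr)
    assume "\<not> ?thesis"
    then have "f k \<in> Ecl I al (T j) (f k')" using f that unfolding Ecl_def X_def by auto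
    then show False using f that unfolding Bad_def by auto
  qed
  show ?thesis
  proof (intro exI conjI allI impI ballI)
    fix k assume "k < Nc" then show "f k \<in> PiE I (\<lambda>S. {..<al S})" using f X_def by auto
  next
    fix k k' assume "k < Nc" "k' < Nc" "k \<noteq> k'"
    then show "\<exists>S\<in>WK. f k S \<noteq> f k' S" using p1[of k k'] p1[of k' k] by (metis linorder_neqE_nat)
  next
    fix j k k' assume "j \<in> J" "k < Nc" "k' < Nc" "k \<noteq> k' \<and> k mod L j = k' mod L j"
    then show "\<exists>S\<in>T j. f k S \<noteq> f k' S" using p2[of j k k'] p2[of j k' k] by (metis linorder_neqE_nat)
  qed
qed




lemma cl_facts:
  fixes m1 m2 N1 N2 i :: nat
  assumes "i < m1 * m2" "m1 \<le> N1 * N2" "N2 \<ge> 1"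
  shows "(i mod m1) div N2 < N1" "(i div m1) * N1 + (i mod m1) div N2 < m2 * N1"
    "((i div m1) * N1 + (i mod m1) div N2) div N1 = i div m1"
    "((i div m1) * N1 + (i mod m1) div N2) mod N1 = (i mod m1) div N2"
proof -
  have m1: "m1 > 0" using assms(1) by (cases m1) auto
  have "i mod m1 < N1 * N2" using m1 assms(2) by (meson mod_less_divisor order_less_le_trans)
  then show a: "(i mod m1) div N2 < N1" using assms(3) by (simp add: div_less_iff_less_mult mult.commute)
  have "i div m1 < m2" using assms(1) m1 by (simp add: div_less_iff_less_mult mult.commute)
  then have "i div m1 + 1 \<le> m2" by simp
  then have "(i div m1 + 1) * N1 \<le> m2 * N1" by (rule mult_right_mono) simp
  then show "(i div m1) * N1 + (i mod m1) div N2 < m2 * N1" using a by (simp add: algebra_simps)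
  show "((i div m1) * N1 + (i mod m1) div N2) div N1 = i div m1" using a by simp
  show "((i div m1) * N1 + (i mod m1) div N2) mod N1 = (i mod m1) div N2" using a by simp
qed

lemma stage2:
  fixes I :: "nat set set" and al :: "nat set \<Rightarrow> nat" and WK :: "nat set set"
    and W :: "nat \<Rightarrow> nat set set" and J :: "nat set" and L :: "nat \<Rightarrow> nat"
    and u :: "nat \<Rightarrow> nat set \<Rightarrow> nat" and m1 m2 N1 N2 :: nat
  assumes fI: "finite I" and WKI: "WK \<subseteq> I" and WI: "\<forall>j\<in>J. W j \<subseteq> I" and fJ: "finite J"
    and L1: "\<forall>j\<in>J. L j \<ge> 1" and N2: "N2 \<ge> 1" and m1le: "m1 \<le> N1 * N2"
    and u: "\<forall>k<m2*N1. u k \<in> PiE I (\<lambda>S. {..<al S})"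
    and umod: "\<forall>j\<in>J. \<forall>k<m2*N1. \<forall>k'<m2*N1. k \<noteq> k' \<and> k mod L j = k' mod L j \<longrightarrow> (\<exists>S\<in>W j \<inter> WK. u k S \<noteq> u k' S)"
    and cond: "(\<Sum>j\<in>J. (L j * N2 - 1) * Qs al (I - (WK \<union> W j))) < Qs al (I - WK)"
  shows "\<exists>f. (\<forall>i<m1*m2. f i \<in> PiE I (\<lambda>S. {..<al S}) \<and> (\<forall>S\<in>WK. f i S = u ((i div m1)*N1 + (i mod m1) div N2) S)) \<and>
     (\<forall>j\<in>J. \<forall>i<m1*m2. \<forall>i'<m1*m2. i \<noteq> i' \<longrightarrow> (\<exists>S\<in>W j. f i S \<noteq> f i' S))"
proof -
  define cl where "cl = (\<lambda>i. (i div m1)*N1 + (i mod m1) div N2)"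
  define X where "X = PiE I (\<lambda>S. {..<al S})"
  define Rel where "Rel = (\<lambda>j i. {i'. i' < m1*m2 \<and> (\<forall>S\<in>W j \<inter> WK. u (cl i') S = u (cl i) S)})"
  have clN: "cl i < m2 * N1" if "i < m1*m2" for i using cl_facts[OF that m1le N2] cl_def by simp
  have Rel_card: "card (Rel j i) \<le> L j * N2" if j: "j \<in> J" and i: "i < m1*m2" for j i
  proof -
    define M where "M = {k. k < m2*N1 \<and> (\<forall>S\<in>W j \<inter> WK. u k S = u (cl i) S)}"
    have "inj_on (\<lambda>k. k mod L j) M"
    proof (rule inj_onI)
      fix k k' assume "k \<in> M" "k' \<in> M" "k mod L j = k' mod L j"
      then show "k = k'" using umod j unfolding M_def by fastforce
    qed
    moreover have "(\<lambda>k. k mod L j) ` M \<subseteq> {..<L j}" using L1 j by auto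
    ultimately have cM: "card M \<le> L j" by (metis card_inj_on_le card_lessThan finite_lessThan)
    have "inj_on (\<lambda>i'. (cl i', (i' mod m1) mod N2)) (Rel j i)"
    proof (rule inj_onI)
      fix x y assume x: "x \<in> Rel j i" and y: "y \<in> Rel j i"
        and e: "(cl x, (x mod m1) mod N2) = (cl y, (y mod m1) mod N2)"
      have xl: "x < m1*m2" and yl: "y < m1*m2" using x y Rel_def by auto
      have d: "x div m1 = y div m1" using cl_facts(3)[OF xl m1le N2] cl_facts(3)[OF yl m1le N2] e cl_def by auto
      have "cl x mod N1 = cl y mod N1" using e by simp
      then have "(x mod m1) div N2 = (y mod m1) div N2"
        using cl_facts(4)[OF xl m1le N2] cl_facts(4)[OF yl m1le N2] unfolding cl_def by simp
      then have "x mod m1 = y mod m1" using e by (metis div_mult_mod_eq prod.inject)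
      then show "x = y" using d by (metis div_mult_mod_eq)
    qed
    moreover have "(\<lambda>i'. (cl i', (i' mod m1) mod N2)) ` (Rel j i) \<subseteq> M \<times> {..<N2}"
      using N2 clN unfolding Rel_def M_def by auto
    moreover have "finite M" unfolding M_def by auto
    ultimately have "card (Rel j i) \<le> card (M \<times> {..<N2})" by (meson card_inj_on_le finite_SigmaI finite_lessThan)
    also have "\<dots> \<le> L j * N2" using cM by (simp add: card_cartesian_product)
    finally show ?thesis .
  qed
  define Bad where "Bad = (\<lambda>i f. \<Union>j\<in>J. \<Union>i'\<in>{i'. i' < i \<and> (\<forall>S\<in>W j \<inter> WK. u (cl i') S = u (cl i) S)}.
       Ecl I al (WK \<union> W j) (\<lambda>S. if S \<in> WK then u (cl i) S else f i' S))"
  define Allow where "Allow = (\<lambda>i. Ecl I al WK (u (cl i)))"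
  have "\<exists>f. \<forall>i<m1*m2. f i \<in> Allow i - Bad i f"
  proof (rule greedy)
    fix i and f g :: "nat \<Rightarrow> nat set \<Rightarrow> nat" assume H: "\<And>k. k < i \<Longrightarrow> f k = g k"
    show "Bad i f = Bad i g" unfolding Bad_def
    proof (intro SUP_cong refl)
      fix j i' assume "i' \<in> {i'. i' < i \<and> (\<forall>S\<in>W j \<inter> WK. u (cl i') S = u (cl i) S)}"
      then have "f i' = g i'" using H by simp
      then show "Ecl I al (WK \<union> W j) (\<lambda>S. if S \<in> WK then u (cl i) S else f i' S) =
           Ecl I al (WK \<union> W j) (\<lambda>S. if S \<in> WK then u (cl i) S else g i' S)" by metis
    qed
  next
    fix i and f :: "nat \<Rightarrow> nat set \<Rightarrow> nat" assume i: "i < m1*m2"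
    have fB: "finite (Bad i f)" unfolding Bad_def using fJ by (auto intro!: finite_Ecl fI)
    have c2: "card (\<Union>i'\<in>{i'. i' < i \<and> (\<forall>S\<in>W j \<inter> WK. u (cl i') S = u (cl i) S)}.
       Ecl I al (WK \<union> W j) (\<lambda>S. if S \<in> WK then u (cl i) S else f i' S))
        \<le> (L j * N2 - 1) * Qs al (I - (WK \<union> W j))" if j: "j \<in> J" for j
    proof -
      have sub: "{i'. i' < i \<and> (\<forall>S\<in>W j \<inter> WK. u (cl i') S = u (cl i) S)} \<subseteq> Rel j i - {i}"
        using i unfolding Rel_def by auto
      have "card {i'. i' < i \<and> (\<forall>S\<in>W j \<inter> WK. u (cl i') S = u (cl i) S)} \<le> card (Rel j i - {i})"
        by (rule card_mono[OF _ sub]) (simp add: Rel_def)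
      also have "\<dots> = card (Rel j i) - 1" using i by (simp add: Rel_def)
      also have "\<dots> \<le> L j * N2 - 1" using Rel_card[OF j i] by simp
      finally have cc: "card {i'. i' < i \<and> (\<forall>S\<in>W j \<inter> WK. u (cl i') S = u (cl i) S)} \<le> L j * N2 - 1" .
      have "card (\<Union>i'\<in>{i'. i' < i \<and> (\<forall>S\<in>W j \<inter> WK. u (cl i') S = u (cl i) S)}.
       Ecl I al (WK \<union> W j) (\<lambda>S. if S \<in> WK then u (cl i) S else f i' S))
          \<le> card {i'. i' < i \<and> (\<forall>S\<in>W j \<inter> WK. u (cl i') S = u (cl i) S)} * Qs al (I - (WK \<union> W j))"
        by (rule card_UN_le_const) (use j WI WKI in \<open>auto intro!: card_Ecl_le[OF fI] finite_Ecl[OF fI]\<close>)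
      also have "\<dots> \<le> (L j * N2 - 1) * Qs al (I - (WK \<union> W j))"
        using cc by (rule mult_right_mono) simp
      finally show ?thesis .
    qed
    have "card (Bad i f) \<le> (\<Sum>j\<in>J. card (\<Union>i'\<in>{i'. i' < i \<and> (\<forall>S\<in>W j \<inter> WK. u (cl i') S = u (cl i) S)}.
       Ecl I al (WK \<union> W j) (\<lambda>S. if S \<in> WK then u (cl i) S else f i' S)))"
      unfolding Bad_def by (rule card_UN_le[OF fJ])
    also have "\<dots> \<le> (\<Sum>j\<in>J. (L j * N2 - 1) * Qs al (I - (WK \<union> W j)))"
      by (rule sum_mono) (rule c2)
    finally have "card (Bad i f) < Qs al (I - WK)" using cond by linarith
    also have "Qs al (I - WK) = card (Allow i)" unfolding Allow_def
    proof (rule card_Ecl_eq[OF fI WKI, symmetric], intro ballI)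
      fix S assume "S \<in> WK"
      then show "u (cl i) S < al S" using u clN[OF i] WKI unfolding PiE_def Pi_def by blast
    qed
    finally have "card (Bad i f) < card (Allow i)" .
    then have "\<not> Allow i \<subseteq> Bad i f" using fB card_mono by (metis not_le)
    then show "\<exists>x. x \<in> Allow i - Bad i f" by blast
  qed
  then obtain f where f: "\<forall>i<m1*m2. f i \<in> Allow i - Bad i f" by auto
  have fX: "f i \<in> X" and fW: "\<forall>S\<in>WK. f i S = u (cl i) S" if "i < m1*m2" for i
    using f that unfolding Allow_def Ecl_def X_def by auto
  have p: "\<exists>S\<in>W j. f i S \<noteq> f i' S" if j: "j \<in> J" and i: "i < m1*m2" and i': "i' < i" for j i i'
  proof (cases "\<forall>S\<in>W j \<inter> WK. u (cl i') S = u (cl i) S")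
    case True
    have "f i \<notin> Ecl I al (WK \<union> W j) (\<lambda>S. if S \<in> WK then u (cl i) S else f i' S)"
      using f i i' j True unfolding Bad_def by auto
    then obtain S where S: "S \<in> WK \<union> W j" "f i S \<noteq> (if S \<in> WK then u (cl i) S else f i' S)"
      using fX[OF i] unfolding Ecl_def X_def by auto
    then show ?thesis using fW[OF i] by (cases "S \<in> WK") auto
  next
    case False
    then obtain S where S: "S \<in> W j \<inter> WK" "u (cl i') S \<noteq> u (cl i) S" by auto
    then show ?thesis using fW[OF i] fW[of i'] i i' by (metis IntD1 IntD2 order.strict_trans)
  qed
  show ?thesis
  proof (intro exI conjI allI impI ballI)
    fix i assume "i < m1*m2" then show "f i \<in> PiE I (\<lambda>S. {..<al S})" using fX X_def by auto
  next
    fix i S assume "i < m1*m2" "S \<in> WK" then show "f i S = u ((i div m1)*N1 + (i mod m1) div N2) S"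
      using fW cl_def by auto
  next
    fix j i i' assume "j \<in> J" "i < m1*m2" "i' < m1*m2" "i \<noteq> i'"
    then show "\<exists>S\<in>W j. f i S \<noteq> f i' S" using p[of j i i'] p[of j i' i] by (metis linorder_neqE_nat)
  qed
qed




lemma finite_links: "finite (links K)"
proof -
  have "links K \<subseteq> Pow {1..K}" unfolding links_def by auto
  then show ?thesis by (rule finite_subset) simp
qed

lemma W_links: "W K j \<subseteq> links K" unfolding W_def by auto

lemma zero_error_code:
  fixes K n :: nat and C :: "nat set \<Rightarrow> real" and m1 m2 N1 N2 :: nat and L :: "nat \<Rightarrow> nat"
  defines "al \<equiv> blk_alph C n" and "I \<equiv> links K" and "WK \<equiv> W K K" and "J \<equiv> {1..<K}"
  assumes L1: "\<forall>j\<in>J. L j \<ge> 1" and N2: "N2 \<ge> 1" and m1le: "m1 \<le> N1 * N2"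
    and cond1: "(m2*N1 - 1) * Qs al (I - WK) + (\<Sum>j\<in>J. ((m2*N1 - 1) div L j) * Qs al (I - (W K j \<inter> WK))) < Qs al I"
    and cond2: "(\<Sum>j\<in>J. (L j * N2 - 1) * Qs al (I - (WK \<union> W K j))) < Qs al (I - WK)"
  shows "\<exists>enc dec. valid_encoder K C n m1 m2 enc \<and> error_prob K m1 m2 enc dec = 0"
proof -
  have fI: "finite I" unfolding I_def by (rule finite_links)
  have WKI: "WK \<subseteq> I" unfolding WK_def I_def by (rule W_links)
  have WI: "\<forall>j\<in>J. W K j \<subseteq> I" unfolding I_def using W_links by auto
  have fJ: "finite J" unfolding J_def by simp
  have TI: "\<forall>j\<in>J. W K j \<inter> WK \<subseteq> I" using WKI by auto
  have "\<exists>u. (\<forall>k<m2*N1. u k \<in> PiE I (\<lambda>S. {..<al S})) \<and>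
    (\<forall>k<m2*N1. \<forall>k'<m2*N1. k \<noteq> k' \<longrightarrow> (\<exists>S\<in>WK. u k S \<noteq> u k' S)) \<and>
    (\<forall>j\<in>J. \<forall>k<m2*N1. \<forall>k'<m2*N1. k \<noteq> k' \<and> k mod L j = k' mod L j \<longrightarrow> (\<exists>S\<in>W K j \<inter> WK. u k S \<noteq> u k' S))"
    by (rule stage1[OF fI WKI TI fJ L1 cond1])
  then obtain u where u: "\<forall>k<m2*N1. u k \<in> PiE I (\<lambda>S. {..<al S})"
    and uK: "\<forall>k<m2*N1. \<forall>k'<m2*N1. k \<noteq> k' \<longrightarrow> (\<exists>S\<in>WK. u k S \<noteq> u k' S)"
    and umod: "\<forall>j\<in>J. \<forall>k<m2*N1. \<forall>k'<m2*N1. k \<noteq> k' \<and> k mod L j = k' mod L j \<longrightarrow> (\<exists>S\<in>W K j \<inter> WK. u k S \<noteq> u k' S)"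
    by (elim exE conjE)
  have "\<exists>f. (\<forall>i<m1*m2. f i \<in> PiE I (\<lambda>S. {..<al S}) \<and> (\<forall>S\<in>WK. f i S = u ((i div m1)*N1 + (i mod m1) div N2) S)) \<and>
     (\<forall>j\<in>J. \<forall>i<m1*m2. \<forall>i'<m1*m2. i \<noteq> i' \<longrightarrow> (\<exists>S\<in>W K j. f i S \<noteq> f i' S))"
    by (rule stage2[OF fI WKI WI fJ L1 N2 m1le u umod cond2])
  then obtain f where f: "\<forall>i<m1*m2. f i \<in> PiE I (\<lambda>S. {..<al S}) \<and> (\<forall>S\<in>WK. f i S = u ((i div m1)*N1 + (i mod m1) div N2) S)"
    and fj: "\<forall>j\<in>J. \<forall>i<m1*m2. \<forall>i'<m1*m2. i \<noteq> i' \<longrightarrow> (\<exists>S\<in>W K j. f i S \<noteq> f i' S)"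
    by (elim exE conjE)
  define enc where "enc = (\<lambda>S a b. f (b*m1 + a) S)"
  define dec where "dec = (\<lambda>(j::nat) y. SOME p. p \<in> {..<m1} \<times> {..<m2} \<and> rx_out K enc j (fst p) (snd p) = y)"
  have idx: "b*m1 + a < m1*m2" "(b*m1 + a) div m1 = b" "(b*m1 + a) mod m1 = a" if "a < m1" "b < m2" for a b
  proof -
    have "b*m1 + a < b*m1 + m1" using that by simp
    also have "\<dots> = (b+1)*m1" by simp
    also have "\<dots> \<le> m2*m1" using that by (intro mult_right_mono) auto
    finally show "b*m1 + a < m1*m2" by (simp add: mult.commute)
    show "(b*m1 + a) div m1 = b" "(b*m1 + a) mod m1 = a" using that by auto
  qed
  have valid: "valid_encoder K C n m1 m2 enc"
    unfolding valid_encoder_def enc_def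
  proof (intro ballI allI impI)
    fix S a b assume "S \<in> links K" "a < m1" "b < m2"
    then show "f (b*m1 + a) S < blk_alph C n S" using f idx[of a b] unfolding al_def I_def PiE_def Pi_def by blast
  qed
  have noerr: "\<not> error_event K enc dec a b" if ab: "a < m1" "b < m2" for a b
  proof -
    have P: "(a,b) \<in> {..<m1} \<times> {..<m2} \<and> rx_out K enc j (fst (a,b)) (snd (a,b)) = rx_out K enc j a b" for j
      using ab by simp
    have r1: "dec j (rx_out K enc j a b) = (a, b)" if j: "j \<in> {1..<K}" for j
      unfolding dec_def
    proof (rule someI2[where a="(a,b)" and Q="\<lambda>p. p = (a,b)"])
      show "(a,b) \<in> {..<m1} \<times> {..<m2} \<and> rx_out K enc j (fst (a,b)) (snd (a,b)) = rx_out K enc j a b"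
        using ab by simp
    next
      fix p assume p: "p \<in> {..<m1} \<times> {..<m2} \<and> rx_out K enc j (fst p) (snd p) = rx_out K enc j a b"
      obtain a' b' where pp: "p = (a', b')" by fastforce
      have a': "a' < m1" "b' < m2" using p pp by auto
      show "p = (a, b)"
      proof (rule ccontr)
        assume ne: "p \<noteq> (a, b)"
        have "b'*m1 + a' \<noteq> b*m1 + a" using ne pp idx[OF a'] idx[OF ab] by metis
        then obtain S where S: "S \<in> W K j" "f (b'*m1 + a') S \<noteq> f (b*m1 + a) S"
          using fj j idx(1)[OF a'] idx(1)[OF ab] unfolding J_def by blast
        have "rx_out K enc j a' b' S = rx_out K enc j a b S" using p pp by simp
        then show False using S unfolding rx_out_def enc_def by simp
      qed
    qed
    have r2: "snd (dec K (rx_out K enc K a b)) = b"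
      unfolding dec_def
    proof (rule someI2[where a="(a,b)" and Q="\<lambda>p. snd p = b"])
      show "(a,b) \<in> {..<m1} \<times> {..<m2} \<and> rx_out K enc K (fst (a,b)) (snd (a,b)) = rx_out K enc K a b"
        using ab by simp
    next
      fix p assume p: "p \<in> {..<m1} \<times> {..<m2} \<and> rx_out K enc K (fst p) (snd p) = rx_out K enc K a b"
      obtain a' b' where pp: "p = (a', b')" by fastforce
      have a': "a' < m1" "b' < m2" using p pp by auto
      let ?c = "\<lambda>i. (i div m1)*N1 + (i mod m1) div N2"
      have agree: "\<forall>S\<in>WK. u (?c (b'*m1 + a')) S = u (?c (b*m1 + a)) S"
      proof
        fix S assume S: "S \<in> WK"
        have "rx_out K enc K a' b' S = rx_out K enc K a b S" using p pp by simp
        then have "f (b'*m1 + a') S = f (b*m1 + a) S" using S unfolding rx_out_def enc_def WK_def by simp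
        then show "u (?c (b'*m1 + a')) S = u (?c (b*m1 + a)) S"
          using f S idx(1)[OF a'] idx(1)[OF ab] by metis
      qed
      have c1: "?c (b'*m1 + a') < m2*N1" using cl_facts(2)[OF idx(1)[OF a'] m1le N2] .
      have c2: "?c (b*m1 + a) < m2*N1" using cl_facts(2)[OF idx(1)[OF ab] m1le N2] .
      have "?c (b'*m1 + a') = ?c (b*m1 + a)" using uK c1 c2 agree by metis
      then have "?c (b'*m1 + a') div N1 = ?c (b*m1 + a) div N1" by simp
      then have "(b'*m1 + a') div m1 = (b*m1 + a) div m1"
        using cl_facts(3)[OF idx(1)[OF a'] m1le N2] cl_facts(3)[OF idx(1)[OF ab] m1le N2] by simp
      then show "snd p = b" using idx(2)[OF a'] idx(2)[OF ab] pp by simp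
    qed
    show ?thesis unfolding error_event_def using r1 r2 by auto
  qed
  have "{(a, b). a < m1 \<and> b < m2 \<and> error_event K enc dec a b} = {}" (is "?E = {}") using noerr by auto
  then have "error_prob K m1 m2 enc dec = 0" unfolding error_prob_def by (simp only: card.empty)
  then show ?thesis using valid by blast
qed




lemma ms_ge1: "msg_size n a \<ge> 1"
proof -
  have "0 < 2 powr (real n * a)" by simp
  then have "0 < \<lceil>2 powr (real n * a)\<rceil>" by (simp add: zero_less_ceiling)
  then show ?thesis unfolding msg_size_def by linarith
qed

lemma ms_real: "real (msg_size n a) = of_int \<lceil>2 powr (real n * a)\<rceil>"
proof -
  have "0 < 2 powr (real n * a)" by simp
  then have "0 \<le> \<lceil>2 powr (real n * a)\<rceil>" using ceiling_mono[of 0 "2 powr (real n * a)"] by simp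
  then show ?thesis unfolding msg_size_def by simp
qed

lemma ms_lower: "2 powr (real n * a) \<le> real (msg_size n a)"
  unfolding ms_real by simp

lemma ms_upper: assumes "a \<ge> 0" shows "real (msg_size n a) \<le> 2 * 2 powr (real n * a)"
proof -
  have "1 \<le> 2 powr (real n * a)" using assms by (simp add: ge_one_powr_ge_zero)
  moreover have "real (msg_size n a) \<le> 2 powr (real n * a) + 1" unfolding ms_real by simp
  ultimately show ?thesis by linarith
qed

lemma ms_zero: "msg_size n 0 = 1"
  unfolding msg_size_def by simp

lemma ms_mult: assumes "a \<ge> 0" "b \<ge> 0" shows "msg_size n (a + b) \<le> msg_size n a * msg_size n b"
proof -
  have "real (msg_size n (a + b)) = of_int \<lceil>2 powr (real n * a) * 2 powr (real n * b)\<rceil>"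
    unfolding ms_real by (simp add: distrib_left powr_add)
  also have "\<dots> \<le> real (msg_size n a) * real (msg_size n b)"
  proof -
    have "2 powr (real n * a) * 2 powr (real n * b) \<le> real (msg_size n a) * real (msg_size n b)"
      by (intro mult_mono ms_lower) auto
    then have "\<lceil>2 powr (real n * a) * 2 powr (real n * b)\<rceil> \<le> int (msg_size n a * msg_size n b)"
      by (simp add: ceiling_le_iff)
    then show ?thesis by (metis of_int_le_iff of_int_of_nat_eq of_nat_mult)
  qed
  finally show ?thesis by (metis of_nat_le_iff of_nat_mult)
qed

lemma decay:
  fixes X :: "nat \<Rightarrow> real"
  assumes "c > 0" "t < 1" "\<And>n. 0 \<le> X n" "\<And>n. X n \<le> B * 2 powr (real n * ((t - 1) * c))"
  shows "X \<longlonglongrightarrow> 0"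
proof (rule tendsto_sandwich[of "\<lambda>_. 0" _ _ "\<lambda>n. B * 2 powr (real n * ((t - 1) * c))"])
  show "\<forall>\<^sub>F n in sequentially. 0 \<le> X n" using assms by simp
  show "\<forall>\<^sub>F n in sequentially. X n \<le> B * 2 powr (real n * ((t - 1) * c))" using assms by simp
  show "(\<lambda>_. 0) \<longlonglongrightarrow> (0::real)" by simp
  have e: "2 powr (real n * ((t - 1) * c)) = (2 powr ((t - 1) * c)) ^ n" for n
    by (simp add: powr_power[symmetric])
  have "(\<lambda>n. (2 powr ((t - 1) * c)) ^ n) \<longlonglongrightarrow> 0"
  proof (rule LIMSEQ_power_zero)
    have "(t - 1) * c < 0" using assms by (simp add: mult_neg_pos)
    then have "2 powr ((t - 1) * c) < 2 powr 0" by (intro powr_less_mono) auto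
    then show "norm (2 powr ((t - 1) * c)) < 1" by simp
  qed
  then have "(\<lambda>n. B * (2 powr ((t - 1) * c)) ^ n) \<longlonglongrightarrow> B * 0" by (intro tendsto_mult) auto
  then show "(\<lambda>n. B * 2 powr (real n * ((t - 1) * c))) \<longlonglongrightarrow> 0" by (simp add: e)
qed

lemma decay2:
  fixes P :: "nat \<Rightarrow> nat"
  assumes "c \<ge> 0" "t < 1" "c = 0 \<Longrightarrow> (\<forall>n. P n \<le> 1)" "\<And>n. real (P n) \<le> B * 2 powr (real n * (t * c))"
  shows "(\<lambda>n. real (P n - 1) / 2 powr (real n * c)) \<longlonglongrightarrow> 0"
proof (cases "c = 0")
  case True
  then have "\<And>n. P n - 1 = 0" using assms(3) by auto
  then show ?thesis by simp
next
  case False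
  then have c: "c > 0" using assms(1) by simp
  show ?thesis
  proof (rule decay[OF c assms(2)])
    fix n show "0 \<le> real (P n - 1) / 2 powr (real n * c)" by simp
    have "real (P n - 1) / 2 powr (real n * c) \<le> real (P n) / 2 powr (real n * c)"
      by (intro divide_right_mono) auto
    also have "\<dots> \<le> B * 2 powr (real n * (t * c)) / 2 powr (real n * c)"
      by (intro divide_right_mono assms(4)) auto
    also have "\<dots> = B * 2 powr (real n * ((t - 1) * c))"
    proof -
      have "2 powr (real n * (t * c)) / 2 powr (real n * c) = 2 powr (real n * (t * c) - real n * c)"
        by (rule powr_diff[symmetric])
      moreover have "real n * (t * c) - real n * c = real n * ((t - 1) * c)" by (simp add: algebra_simps)
      ultimately show ?thesis by (metis times_divide_eq_right)
    qed
    finally show "real (P n - 1) / 2 powr (real n * c) \<le> B * 2 powr (real n * ((t - 1) * c))" .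
  qed
qed




lemma Q_real:
  assumes hC: "\<forall>S\<in>links K. C S \<ge> 0 \<and> 2 powr C S \<in> \<nat>" and sub: "Ws \<subseteq> links K"
  shows "real (Qs (blk_alph C n) Ws) = 2 powr (real n * capW C Ws)"
proof -
  have fW: "finite Ws" using sub finite_links finite_subset by blast
  have f: "real (blk_alph C n S) = 2 powr (real n * C S)" if S: "S \<in> Ws" for S
  proof -
    obtain m where m: "2 powr C S = real m" using hC S sub by (meson Nats_cases subsetD)
    have "real (blk_alph C n S) = real m ^ n" unfolding blk_alph_def m by simp
    also have "\<dots> = (2 powr C S) ^ n" using m by simp
    also have "\<dots> = 2 powr (real n * C S)" by (simp add: powr_power)
    finally show ?thesis .
  qed
  have "real (Qs (blk_alph C n) Ws) = (\<Prod>S\<in>Ws. 2 powr (real n * C S))"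
    unfolding Qs_def of_nat_prod using f by (rule prod.cong[OF refl])
  also have "\<dots> = 2 powr (\<Sum>S\<in>Ws. real n * C S)" by (simp add: powr_sum)
  also have "\<dots> = 2 powr (real n * capW C Ws)" unfolding capW_def by (simp add: sum_distrib_left)
  finally show ?thesis .
qed

lemma Q_pos:
  assumes hC: "\<forall>S\<in>links K. C S \<ge> 0 \<and> 2 powr C S \<in> \<nat>" and sub: "Ws \<subseteq> links K"
  shows "real (Qs (blk_alph C n) Ws) > 0"
  using Q_real[OF assms] by simp

lemma Q_split: "finite I \<Longrightarrow> Ws \<subseteq> I \<Longrightarrow> Qs al I = Qs al (I - Ws) * Qs al Ws"
  unfolding Qs_def by (rule prod.subset_diff)

lemma capW_nonneg:
  assumes "\<forall>S\<in>links K. C S \<ge> 0" "Ws \<subseteq> links K" shows "capW C Ws \<ge> 0"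
  unfolding capW_def using assms by (auto intro: sum_nonneg)

lemma capW_split:
  assumes "Ws \<subseteq> links K" shows "capW C Ws = capW C (Ws \<inter> B) + capW C (Ws - B)"
proof -
  have "finite Ws" using assms finite_links finite_subset by blast
  then show ?thesis unfolding capW_def by (rule sum.Int_Diff)
qed

lemma capW_mono:
  assumes "\<forall>S\<in>links K. C S \<ge> 0" "A \<subseteq> B" "B \<subseteq> links K" shows "capW C A \<le> capW C B"
proof -
  have "finite B" using assms(3) finite_links finite_subset by blast
  then show ?thesis unfolding capW_def using assms by (intro sum_mono2) auto
qed

lemma rates:
  fixes R1 R2 t cK :: real and cT cR :: "nat \<Rightarrow> real" and J :: "nat set"
  assumes J: "finite J" "J \<noteq> {}" and nn: "R1 \<ge> 0" "R2 \<ge> 0" "t \<ge> 0"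
    and cRnn: "\<forall>j\<in>J. cR j \<ge> 0" and cTK: "\<forall>j\<in>J. cT j \<le> cK"
    and c2: "R2 \<le> t * cK" and c1: "\<forall>j\<in>J. R1 + R2 \<le> t * (cT j + cR j)"
  shows "\<exists>r1 r2. r1 \<ge> 0 \<and> r2 \<ge> 0 \<and> R1 = r1 + r2 \<and> R2 + r1 \<le> t * cK \<and>
     (\<forall>j\<in>J. r2 \<le> t * cR j \<and> max 0 (R2 + r1 - t * cT j) + r2 \<le> t * cR j)"
proof -
  define mR where "mR = Min (cR ` J)"
  have mle: "mR \<le> cR j" if "j \<in> J" for j unfolding mR_def using J that by simp
  have "mR \<in> cR ` J" unfolding mR_def using J by (intro Min_in) auto
  then obtain j0 where j0: "j0 \<in> J" "mR = cR j0" by blast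
  have mnn: "mR \<ge> 0" using j0 cRnn by simp
  define r2 where "r2 = min R1 (t * mR)"
  define r1 where "r1 = R1 - r2"
  have r2le: "r2 \<le> t * cR j" if "j \<in> J" for j
  proof -
    have "r2 \<le> t * mR" unfolding r2_def by simp
    also have "t * mR \<le> t * cR j" using mle[OF that] nn by (simp add: mult_left_mono)
    finally show ?thesis .
  qed
  have i: "R2 + r1 \<le> t * cK"
  proof (cases "r2 = R1")
    case True then show ?thesis using c2 r1_def by simp
  next
    case False
    then have "r2 = t * mR" unfolding r2_def by (simp add: min_def split: if_splits)
    then have "r2 = t * cR j0" using j0 by simp
    moreover have "t * cT j0 \<le> t * cK" using cTK j0 nn by (simp add: mult_left_mono)
    moreover have "R1 + R2 \<le> t * cT j0 + t * cR j0" using c1 j0 by (simp add: distrib_left)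
    ultimately show ?thesis unfolding r1_def by linarith
  qed
  show ?thesis
  proof (rule exI[of _ r1], rule exI[of _ r2], intro conjI ballI)
    show "0 \<le> r2" using nn mnn unfolding r2_def by simp
    show "0 \<le> r1" unfolding r1_def r2_def by simp
    show "R1 = r1 + r2" unfolding r1_def by simp
    show "R2 + r1 \<le> t * cK" by (rule i)
  next
    fix j assume j: "j \<in> J"
    show "r2 \<le> t * cR j" by (rule r2le[OF j])
    have a: "r2 \<le> t * cR j" by (rule r2le[OF j])
    have b: "R1 + R2 \<le> t * cT j + t * cR j" using c1 j by (simp add: distrib_left)
    have c: "R2 + r1 - t * cT j + r2 \<le> t * cR j" using b unfolding r1_def by linarith
    show "max 0 (R2 + r1 - t * cT j) + r2 \<le> t * cR j"
    proof (cases "0 \<le> R2 + r1 - t * cT j")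
      case True then show ?thesis using c by (simp add: max_def)
    next
      case False then show ?thesis using a by (simp add: max_def)
    qed
  qed
qed




lemma ms2_bound:
  assumes "a \<ge> 0" "b \<ge> 0" "a + b \<le> x"
  shows "real (msg_size n a * msg_size n b) \<le> 4 * 2 powr (real n * x)"
proof -
  have "real (msg_size n a * msg_size n b) \<le> (2 * 2 powr (real n * a)) * (2 * 2 powr (real n * b))"
    unfolding of_nat_mult by (intro mult_mono ms_upper assms) auto
  also have "\<dots> = 4 * 2 powr (real n * (a + b))" by (simp add: distrib_left powr_add)
  also have "\<dots> \<le> 4 * 2 powr (real n * x)" using assms by (simp add: mult_left_mono)
  finally show ?thesis .
qed

lemma ms3_bound:
  assumes "a \<ge> 0" "b \<ge> 0" "c \<ge> 0" "a + b + c \<le> x"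
  shows "real (msg_size n a * msg_size n b * msg_size n c) \<le> 8 * 2 powr (real n * x)"
proof -
  have "real (msg_size n a * msg_size n b * msg_size n c) \<le> (4 * 2 powr (real n * (a + b))) * (2 * 2 powr (real n * c))"
    unfolding of_nat_mult[of "msg_size n a * msg_size n b"]
    by (intro mult_mono ms_upper ms2_bound assms) auto
  also have "\<dots> = 8 * 2 powr (real n * (a + b + c))" by (simp add: distrib_left powr_add)
  also have "\<dots> \<le> 8 * 2 powr (real n * x)" using assms by (simp add: mult_left_mono)
  finally show ?thesis .
qed

lemma trivial_code:
  assumes hC: "\<forall>S\<in>links K. C S \<ge> 0 \<and> 2 powr C S \<in> \<nat>"
  shows "\<exists>enc dec. valid_encoder K C n m1 m2 enc \<and> error_prob K m1 m2 enc dec \<le> 1"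
proof -
  have v: "valid_encoder K C n m1 m2 (\<lambda>S a b. 0)" unfolding valid_encoder_def
  proof (intro ballI allI impI)
    fix S assume S: "S \<in> links K"
    have "real (Qs (blk_alph C n) {S}) > 0" by (rule Q_pos[OF hC]) (use S in auto)
    then show "0 < blk_alph C n S" unfolding Qs_def by simp
  qed
  have "card {(a, b). a < m1 \<and> b < m2 \<and> error_event K (\<lambda>S a b. 0) (\<lambda>_ _. (0,0)) a b} \<le> card ({..<m1} \<times> {..<m2})"
    by (rule card_mono) auto
  then have c: "real (card {(a, b). a < m1 \<and> b < m2 \<and> error_event K (\<lambda>S a b. 0) (\<lambda>_ _. (0,0)) a b}) \<le> real m1 * real m2"
    by (simp add: card_cartesian_product flip: of_nat_mult)
  have "error_prob K m1 m2 (\<lambda>S a b. 0) (\<lambda>_ _. (0,0)) \<le> 1"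
    unfolding error_prob_def
  proof (cases "real m1 * real m2 = 0")
    case True then show "real (card {(a, b). a < m1 \<and> b < m2 \<and> error_event K (\<lambda>S a b. 0) (\<lambda>_ _. (0,0)) a b}) / (real m1 * real m2) \<le> 1" by (simp only: True div_by_0)
  next
    case False then have "real m1 * real m2 > 0" by simp
    then show "real (card {(a, b). a < m1 \<and> b < m2 \<and> error_event K (\<lambda>S a b. 0) (\<lambda>_ _. (0,0)) a b}) / (real m1 * real m2) \<le> 1"
      using c by simp
  qed
  then show ?thesis using v by blast
qed




lemma achievable_inner:
  assumes K2: "K \<ge> 2" and hC: "\<forall>S\<in>links K. C S \<ge> 0 \<and> 2 powr C S \<in> \<nat>"
    and nn: "R1 \<ge> 0" "R2 \<ge> 0" "0 \<le> t" "t < 1"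
    and c2: "R2 \<le> t * capW C (W K K)" and c1: "\<forall>j\<in>{1..<K}. R1 + R2 \<le> t * capW C (W K j)"
  shows "achievable K C (R1, R2)"
proof -
  define J where "J = {1..<K}"
  define I where "I = links K"
  define WK where "WK = W K K"
  define cK where "cK = capW C WK"
  define cT where "cT = (\<lambda>j. capW C (W K j \<inter> WK))"
  define cR where "cR = (\<lambda>j. capW C (W K j - WK))"
  have Cnn: "\<forall>S\<in>links K. C S \<ge> 0" using hC by auto
  have fJ: "finite J" unfolding J_def by simp
  have Jne: "J \<noteq> {}" unfolding J_def using K2 by auto
  have WjI: "W K j \<subseteq> I" for j unfolding I_def by (rule W_links)
  have WKI: "WK \<subseteq> I" unfolding WK_def by (rule WjI)
  have fI: "finite I" unfolding I_def by (rule finite_links)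
  have cRnn: "cR j \<ge> 0" for j unfolding cR_def using WjI I_def by (intro capW_nonneg[OF Cnn]) auto
  have cTnn: "cT j \<ge> 0" for j unfolding cT_def using WjI I_def by (intro capW_nonneg[OF Cnn]) auto
  have cKnn: "cK \<ge> 0" unfolding cK_def using WKI I_def by (intro capW_nonneg[OF Cnn]) auto
  have cTK: "cT j \<le> cK" for j unfolding cT_def cK_def using WKI I_def by (intro capW_mono[OF Cnn]) auto
  have cW: "capW C (W K j) = cT j + cR j" for j unfolding cT_def cR_def by (rule capW_split[OF W_links])
  have c1': "\<forall>j\<in>J. R1 + R2 \<le> t * (cT j + cR j)" using c1 cW unfolding J_def by simp
  have c2': "R2 \<le> t * cK" using c2 unfolding cK_def WK_def .
  obtain r1 r2 where r1: "r1 \<ge> 0" and r2: "r2 \<ge> 0" and R1e: "R1 = r1 + r2" and i: "R2 + r1 \<le> t * cK"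
    and ii: "\<forall>j\<in>J. r2 \<le> t * cR j \<and> max 0 (R2 + r1 - t * cT j) + r2 \<le> t * cR j"
    using rates[OF fJ Jne nn(1,2,3) _ _ c2' c1'] cRnn cTK by blast
  define l where "l = (\<lambda>j. max 0 (R2 + r1 - t * cT j))"
  have lnn: "l j \<ge> 0" for j unfolding l_def by simp
  have iii: "R2 + r1 \<le> l j + t * cT j" for j unfolding l_def by simp
  define Nc where "Nc = (\<lambda>n. msg_size n R2 * msg_size n r1)"
  define N2 where "N2 = (\<lambda>n. msg_size n r2)"
  define L where "L = (\<lambda>j n. if cT j = 0 then Nc n else msg_size n (l j))"
  define A where "A = (\<lambda>n. real (Nc n - 1) / real (Qs (blk_alph C n) WK))"
  define B where "B = (\<lambda>j n. real ((Nc n - 1) div L j n) / real (Qs (blk_alph C n) (W K j \<inter> WK)))"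
  define D where "D = (\<lambda>j n. real (L j n * N2 n - 1) / real (Qs (blk_alph C n) (W K j - WK)))"
  have QWK: "real (Qs (blk_alph C n) WK) = 2 powr (real n * cK)" for n
    unfolding cK_def using WKI I_def by (intro Q_real[OF hC]) auto
  have QT: "real (Qs (blk_alph C n) (W K j \<inter> WK)) = 2 powr (real n * cT j)" for n j
    unfolding cT_def using WjI I_def by (intro Q_real[OF hC]) auto
  have QR: "real (Qs (blk_alph C n) (W K j - WK)) = 2 powr (real n * cR j)" for n j
    unfolding cR_def using WjI I_def by (intro Q_real[OF hC]) auto
  have Nc1: "Nc n \<ge> 1" for n unfolding Nc_def using ms_ge1[of n R2] ms_ge1[of n r1] by (simp add: one_le_mult_iff)
  have A0: "A \<longlonglongrightarrow> 0"
  proof -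
    have "(\<lambda>n. real (Nc n - 1) / 2 powr (real n * cK)) \<longlonglongrightarrow> 0"
    proof (rule decay2[OF cKnn nn(4)])
      assume "cK = 0"
      then have "R2 = 0" "r1 = 0" using i nn r1 by auto
      then show "\<forall>n. Nc n \<le> 1" unfolding Nc_def by (simp add: ms_zero)
    next
      fix n show "real (Nc n) \<le> 4 * 2 powr (real n * (t * cK))"
        unfolding Nc_def using nn r1 i by (intro ms2_bound) auto
    qed
    then show ?thesis unfolding A_def QWK .
  qed
  have B0: "B j \<longlonglongrightarrow> 0" for j
  proof (cases "cT j = 0")
    case True
    then have "B j n = 0" for n unfolding B_def L_def using Nc1[of n] by simp
    then have "B j = (\<lambda>n. 0)" by auto
    then show ?thesis by simp
  next
    case False
    then have cpos: "cT j > 0" using cTnn[of j] by simp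
    show ?thesis
    proof (rule decay[OF cpos nn(4)])
      fix n
      show "0 \<le> B j n" unfolding B_def by simp
      have Lge: "real (L j n) \<ge> 2 powr (real n * l j)" unfolding L_def using False ms_lower by simp
      have Lpos: "0 < 2 powr (real n * l j)" by simp
      have "B j n \<le> (real (Nc n) / real (L j n)) / 2 powr (real n * cT j)"
        unfolding B_def QT
      proof (intro divide_right_mono)
        have "real ((Nc n - 1) div L j n) \<le> real (Nc n - 1) / real (L j n)" by (rule of_nat_div_le_of_nat)
        also have "\<dots> \<le> real (Nc n) / real (L j n)" by (intro divide_right_mono) auto
        finally show "real ((Nc n - 1) div L j n) \<le> real (Nc n) / real (L j n)" .
      qed simp
      also have "\<dots> \<le> (4 * 2 powr (real n * (R2 + r1)) / 2 powr (real n * l j)) / 2 powr (real n * cT j)"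
      proof (intro divide_right_mono frac_le)
        show "real (Nc n) \<le> 4 * 2 powr (real n * (R2 + r1))" unfolding Nc_def using nn r1 by (intro ms2_bound) auto
      qed (use Lge Lpos in auto)
      also have "\<dots> \<le> (4 * 2 powr (real n * (l j + t * cT j)) / 2 powr (real n * l j)) / 2 powr (real n * cT j)"
        using iii[of j] by (intro divide_right_mono mult_left_mono) (auto intro!: mult_left_mono)
      also have "\<dots> = 4 * 2 powr (real n * ((t - 1) * cT j))"
      proof -
        have "2 powr (real n * (l j + t * cT j)) = 2 powr (real n * l j) * 2 powr (real n * ((t - 1) * cT j)) * 2 powr (real n * cT j)"
          by (simp add: powr_add[symmetric] algebra_simps)
        then show ?thesis by simp
      qed
      finally show "B j n \<le> 4 * 2 powr (real n * ((t - 1) * cT j))" .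
    qed
  qed
  have D0: "D j \<longlonglongrightarrow> 0" if j: "j \<in> J" for j
  proof (cases "cT j = 0")
    case True
    have "(\<lambda>n. real (L j n * N2 n - 1) / 2 powr (real n * cR j)) \<longlonglongrightarrow> 0"
    proof (rule decay2[OF cRnn nn(4)])
      assume "cR j = 0"
      moreover have "R1 + R2 \<le> t * (cT j + cR j)" using c1' j by blast
      ultimately have "R1 + R2 \<le> 0" using True by simp
      then have "R2 = 0" "r1 = 0" "r2 = 0" using nn r1 r2 R1e by auto
      then show "\<forall>n. L j n * N2 n \<le> 1" unfolding L_def Nc_def N2_def using True by (simp add: ms_zero)
    next
      fix n
      have "R1 + R2 \<le> t * (cT j + cR j)" using c1' j by blast
      then have "R2 + r1 + r2 \<le> t * cR j" using True R1e by simp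
      moreover have "L j n * N2 n = msg_size n R2 * msg_size n r1 * msg_size n r2"
        unfolding L_def Nc_def N2_def using True by simp
      ultimately show "real (L j n * N2 n) \<le> 8 * 2 powr (real n * (t * cR j))"
        using ms3_bound[of R2 r1 r2 "t * cR j" n] nn r1 r2 by simp
    qed
    then show ?thesis unfolding D_def QR .
  next
    case False
    have "(\<lambda>n. real (L j n * N2 n - 1) / 2 powr (real n * cR j)) \<longlonglongrightarrow> 0"
    proof (rule decay2[OF cRnn nn(4)])
      assume "cR j = 0"
      then have "l j + r2 \<le> 0" using ii j unfolding l_def by auto
      then have "l j = 0" "r2 = 0" using lnn[of j] r2 by auto
      then show "\<forall>n. L j n * N2 n \<le> 1" unfolding L_def N2_def using False by (simp add: ms_zero)
    next
      fix n
      have "l j + r2 \<le> t * cR j" using ii j unfolding l_def by auto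
      moreover have "L j n * N2 n = msg_size n (l j) * msg_size n r2"
        unfolding L_def N2_def using False by simp
      ultimately show "real (L j n * N2 n) \<le> 4 * 2 powr (real n * (t * cR j))"
        using ms2_bound[of "l j" r2 "t * cR j" n] lnn r2 by simp
    qed
    then show ?thesis unfolding D_def QR .
  qed
  have S1: "(\<lambda>n. A n + (\<Sum>j\<in>J. B j n)) \<longlonglongrightarrow> 0"
    using tendsto_add[OF A0 tendsto_null_sum[OF B0]] by simp
  have S2: "(\<lambda>n. \<Sum>j\<in>J. D j n) \<longlonglongrightarrow> 0"
    by (intro tendsto_null_sum D0)
  have ev1: "eventually (\<lambda>n. A n + (\<Sum>j\<in>J. B j n) < 1) sequentially"
    using order_tendstoD(2)[OF S1, of 1] by simp
  have ev2: "eventually (\<lambda>n. (\<Sum>j\<in>J. D j n) < 1) sequentially"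
    using order_tendstoD(2)[OF S2, of 1] by simp
  obtain N0 where N0: "\<And>n. n \<ge> N0 \<Longrightarrow> A n + (\<Sum>j\<in>J. B j n) < 1 \<and> (\<Sum>j\<in>J. D j n) < 1"
    using eventually_conj[OF ev1 ev2] unfolding eventually_sequentially by blast
  have code: "\<exists>enc dec. valid_encoder K C n (msg_size n R1) (msg_size n R2) enc \<and>
      error_prob K (msg_size n R1) (msg_size n R2) enc dec = 0" if n: "n \<ge> N0" for n
  proof -
    let ?Q = "\<lambda>Ws. real (Qs (blk_alph C n) Ws)"
    have Qp: "?Q Ws > 0" if "Ws \<subseteq> I" for Ws using Q_pos[OF hC] that unfolding I_def by blast
    have QI1: "?Q I = ?Q (I - WK) * ?Q WK" using Q_split[OF fI WKI] by simp
    have QI2: "?Q I = ?Q (I - (W K j \<inter> WK)) * ?Q (W K j \<inter> WK)" for j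
    proof -
      have "W K j \<inter> WK \<subseteq> I" using WjI[of j] by blast
      from Q_split[OF fI this, of "blk_alph C n"] show ?thesis by simp
    qed
    have QI3: "?Q (I - WK) = ?Q (I - (WK \<union> W K j)) * ?Q (W K j - WK)" for j
    proof -
      have "Qs (blk_alph C n) (I - WK) = Qs (blk_alph C n) ((I - WK) - (W K j - WK)) * Qs (blk_alph C n) (W K j - WK)"
        using fI WjI by (intro Q_split) auto
      moreover have "(I - WK) - (W K j - WK) = I - (WK \<union> W K j)" by auto
      ultimately show ?thesis by simp
    qed
    have t1: "?Q I * A n = real (Nc n - 1) * ?Q (I - WK)"
      unfolding A_def QI1 using Qp[OF WKI] by (simp add: field_simps)
    have t2: "?Q I * B j n = real ((Nc n - 1) div L j n) * ?Q (I - (W K j \<inter> WK))" for j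
    proof -
      have "?Q (W K j \<inter> WK) > 0" using Qp[of "W K j \<inter> WK"] WjI[of j] by blast
      then show ?thesis unfolding B_def QI2[of j] by (simp add: field_simps)
    qed
    have t3: "?Q (I - WK) * D j n = real (L j n * N2 n - 1) * ?Q (I - (WK \<union> W K j))" for j
    proof -
      have "?Q (W K j - WK) > 0" using Qp[of "W K j - WK"] WjI[of j] by blast
      then show ?thesis unfolding D_def QI3[of j] by (simp add: field_simps)
    qed
    have s1: "A n + (\<Sum>j\<in>J. B j n) < 1" and s2: "(\<Sum>j\<in>J. D j n) < 1" using N0[OF n] by auto
    have "real (Nc n - 1) * ?Q (I - WK) + (\<Sum>j\<in>J. real ((Nc n - 1) div L j n) * ?Q (I - (W K j \<inter> WK)))
        = ?Q I * (A n + (\<Sum>j\<in>J. B j n))"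
      by (simp add: distrib_left sum_distrib_left t1 t2)
    also have "\<dots> < ?Q I" using s1 Qp[of I] by simp
    finally have rr1: "real ((Nc n - 1) * Qs (blk_alph C n) (I - WK) + (\<Sum>j\<in>J. ((Nc n - 1) div L j n) * Qs (blk_alph C n) (I - (W K j \<inter> WK))))
        < real (Qs (blk_alph C n) I)" by simp
    have "(\<Sum>j\<in>J. real (L j n * N2 n - 1) * ?Q (I - (WK \<union> W K j))) = ?Q (I - WK) * (\<Sum>j\<in>J. D j n)"
      by (simp add: sum_distrib_left t3)
    also have "\<dots> < ?Q (I - WK)" using s2 Qp[of "I - WK"] by simp
    finally have rr2: "real (\<Sum>j\<in>J. (L j n * N2 n - 1) * Qs (blk_alph C n) (I - (WK \<union> W K j)))
        < real (Qs (blk_alph C n) (I - WK))" by simp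
    have cond1: "(msg_size n R2 * msg_size n r1 - 1) * Qs (blk_alph C n) (links K - W K K) +
        (\<Sum>j\<in>{1..<K}. ((msg_size n R2 * msg_size n r1 - 1) div L j n) * Qs (blk_alph C n) (links K - (W K j \<inter> W K K)))
        < Qs (blk_alph C n) (links K)"
      using rr1 unfolding Nc_def I_def WK_def J_def of_nat_less_iff .
    have cond2: "(\<Sum>j\<in>{1..<K}. (L j n * msg_size n r2 - 1) * Qs (blk_alph C n) (links K - (W K K \<union> W K j)))
        < Qs (blk_alph C n) (links K - W K K)"
      using rr2 unfolding N2_def I_def WK_def J_def of_nat_less_iff .
    have L1: "\<forall>j\<in>{1..<K}. L j n \<ge> 1" unfolding L_def using Nc1 ms_ge1 by simp
    have m1le: "msg_size n R1 \<le> msg_size n r1 * msg_size n r2" unfolding R1e by (rule ms_mult[OF r1 r2])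
    show ?thesis by (rule zero_error_code[OF L1 ms_ge1 m1le cond1 cond2])
  qed
  define Pe where "Pe = (\<lambda>n::nat. if n \<ge> N0 then 0 else (1::real))"
  have Pe0: "Pe \<longlonglongrightarrow> 0"
  proof (rule tendsto_eventually)
    show "\<forall>\<^sub>F n in sequentially. Pe n = 0" unfolding Pe_def eventually_sequentially by auto
  qed
  show ?thesis unfolding achievable_def fst_conv snd_conv
  proof (intro conjI exI[of _ Pe] allI)
    show "0 \<le> R1" "0 \<le> R2" using nn by auto
    show "Pe \<longlonglongrightarrow> 0" by (rule Pe0)
  next
    fix n
    show "\<exists>enc dec. valid_encoder K C n (msg_size n R1) (msg_size n R2) enc \<and>
       error_prob K (msg_size n R1) (msg_size n R2) enc dec \<le> Pe n"
    proof (cases "n \<ge> N0")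
      case True
      then have "Pe n = 0" unfolding Pe_def by simp
      then show ?thesis using code[OF True] by (metis order_refl)
    next
      case False then show ?thesis using trivial_code[OF hC] unfolding Pe_def by simp
    qed
  qed
qed




lemma rx_eq: "(\<And>S. S \<in> W K j \<Longrightarrow> rx_out K enc j a b S = rx_out K enc j a' b' S) \<Longrightarrow> rx_out K enc j a b = rx_out K enc j a' b'"
  unfolding rx_out_def by (rule ext) simp

lemma rx_restrict_eq: "restrict (rx_out K enc j a b) (W K j) = restrict (rx_out K enc j a' b') (W K j) \<Longrightarrow> rx_out K enc j a b = rx_out K enc j a' b'"
  by (rule rx_eq) (metis restrict_apply')

lemma rx_restrict_PiE:
  assumes "valid_encoder K C n m1 m2 enc" "a < m1" "b < m2"
  shows "restrict (rx_out K enc j a b) (W K j) \<in> PiE (W K j) (\<lambda>S. {..<blk_alph C n S})"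
proof -
  have "enc S a b < blk_alph C n S" if "S \<in> W K j" for S
  proof -
    have "S \<in> links K" using that W_links by blast
    then show ?thesis using assms unfolding valid_encoder_def by blast
  qed
  then show ?thesis unfolding rx_out_def by simp
qed

lemma card_correct_j:
  assumes v: "valid_encoder K C n m1 m2 enc"
  shows "card {(a, b). a < m1 \<and> b < m2 \<and> dec j (rx_out K enc j a b) = (a, b)} \<le> Qs (blk_alph C n) (W K j)"
proof -
  let ?G = "{(a, b). a < m1 \<and> b < m2 \<and> dec j (rx_out K enc j a b) = (a, b)}"
  let ?h = "\<lambda>p. restrict (rx_out K enc j (fst p) (snd p)) (W K j)"
  have inj: "inj_on ?h ?G"
  proof (rule inj_onI)
    fix p q assume p: "p \<in> ?G" and q: "q \<in> ?G" and e: "?h p = ?h q"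
    have "rx_out K enc j (fst p) (snd p) = rx_out K enc j (fst q) (snd q)"
      using e by (intro rx_restrict_eq) simp
    moreover have "dec j (rx_out K enc j (fst p) (snd p)) = p" using p by (cases p) simp
    moreover have "dec j (rx_out K enc j (fst q) (snd q)) = q" using q by (cases q) simp
    ultimately show "p = q" by metis
  qed
  have sub: "?h ` ?G \<subseteq> PiE (W K j) (\<lambda>S. {..<blk_alph C n S})"
  proof
    fix y assume "y \<in> ?h ` ?G"
    then obtain p where p: "p \<in> ?G" and y: "y = ?h p" by blast
    have "fst p < m1" "snd p < m2" using p by (cases p, simp)+
    then show "y \<in> PiE (W K j) (\<lambda>S. {..<blk_alph C n S})" unfolding y by (rule rx_restrict_PiE[OF v])
  qed
  have fW: "finite (W K j)" using W_links finite_links finite_subset by blast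
  have "card ?G \<le> card (PiE (W K j) (\<lambda>S. {..<blk_alph C n S}))"
    by (rule card_inj_on_le[OF inj sub]) (simp add: fW finite_PiE)
  also have "\<dots> = Qs (blk_alph C n) (W K j)" unfolding Qs_def using fW by (simp add: card_PiE)
  finally show ?thesis .
qed

lemma card_correct_K:
  assumes v: "valid_encoder K C n m1 m2 enc"
  shows "card {(a, b). a < m1 \<and> b < m2 \<and> snd (dec K (rx_out K enc K a b)) = b} \<le> m1 * Qs (blk_alph C n) (W K K)"
proof -
  let ?G = "{(a, b). a < m1 \<and> b < m2 \<and> snd (dec K (rx_out K enc K a b)) = b}"
  let ?h = "\<lambda>p. (fst p, restrict (rx_out K enc K (fst p) (snd p)) (W K K))"
  have inj: "inj_on ?h ?G"
  proof (rule inj_onI)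
    fix p q assume p: "p \<in> ?G" and q: "q \<in> ?G" and e: "?h p = ?h q"
    have "restrict (rx_out K enc K (fst p) (snd p)) (W K K) = restrict (rx_out K enc K (fst q) (snd q)) (W K K)"
      using arg_cong[OF e, of snd] by (simp only: snd_conv)
    then have "rx_out K enc K (fst p) (snd p) = rx_out K enc K (fst q) (snd q)"
      by (rule rx_restrict_eq)
    moreover have f: "fst p = fst q" using e by simp
    moreover have "snd (dec K (rx_out K enc K (fst p) (snd p))) = snd p" using p by (cases p) simp
    moreover have "snd (dec K (rx_out K enc K (fst q) (snd q))) = snd q" using q by (cases q) simp
    ultimately show "p = q" by (metis prod_eq_iff)
  qed
  have sub: "?h ` ?G \<subseteq> {..<m1} \<times> PiE (W K K) (\<lambda>S. {..<blk_alph C n S})"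
  proof
    fix y assume "y \<in> ?h ` ?G"
    then obtain p where p: "p \<in> ?G" and y: "y = ?h p" by blast
    have a: "fst p < m1" "snd p < m2" using p by (cases p, simp)+
    have "restrict (rx_out K enc K (fst p) (snd p)) (W K K) \<in> PiE (W K K) (\<lambda>S. {..<blk_alph C n S})"
      using a by (rule rx_restrict_PiE[OF v])
    then show "y \<in> {..<m1} \<times> PiE (W K K) (\<lambda>S. {..<blk_alph C n S})" unfolding y using a by simp
  qed
  have fW: "finite (W K K)" using W_links finite_links finite_subset by blast
  have "card ?G \<le> card ({..<m1} \<times> PiE (W K K) (\<lambda>S. {..<blk_alph C n S}))"
    by (rule card_inj_on_le[OF inj sub]) (simp add: fW finite_PiE)
  also have "\<dots> = m1 * Qs (blk_alph C n) (W K K)" unfolding Qs_def using fW by (simp add: card_PiE card_cartesian_product)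
  finally show ?thesis .
qed

lemma err_lower:
  fixes E G :: "(nat \<times> nat) set"
  assumes "G \<union> E \<supseteq> {..<m1} \<times> {..<m2}" "card G \<le> q" "m1 > 0" "m2 > 0" "finite E" "finite G"
  shows "real (card E) / (real m1 * real m2) \<ge> 1 - real q / (real m1 * real m2)"
proof -
  have "m1 * m2 = card ({..<m1} \<times> {..<m2})" by (simp add: card_cartesian_product)
  also have "\<dots> \<le> card (G \<union> E)" using assms(1,5,6) by (intro card_mono) (auto intro: finite_subset)
  also have "\<dots> \<le> card G + card E" by (rule card_Un_le)
  finally have "real m1 * real m2 \<le> real q + real (card E)" using assms(2) by (simp flip: of_nat_mult of_nat_add)
  moreover have pos: "real m1 * real m2 > 0" using assms by simp
  ultimately have "(real q + real (card E)) / (real m1 * real m2) \<ge> 1" by simp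
  then show ?thesis using pos by (simp add: add_divide_distrib)
qed

lemma errprob_j:
  assumes v: "valid_encoder K C n m1 m2 enc" and j: "j \<in> {1..<K}" and m: "m1 > 0" "m2 > 0"
  shows "error_prob K m1 m2 enc dec \<ge> 1 - real (Qs (blk_alph C n) (W K j)) / (real m1 * real m2)"
  unfolding error_prob_def
proof (rule err_lower[OF _ card_correct_j[OF v] m])
  show "finite {(a, b). a < m1 \<and> b < m2 \<and> error_event K enc dec a b}"
    by (rule finite_subset[of _ "{..<m1} \<times> {..<m2}"]) auto
  show "finite {(a, b). a < m1 \<and> b < m2 \<and> dec j (rx_out K enc j a b) = (a, b)}"
    by (rule finite_subset[of _ "{..<m1} \<times> {..<m2}"]) auto
  show "{..<m1} \<times> {..<m2} \<subseteq> {(a, b). a < m1 \<and> b < m2 \<and> dec j (rx_out K enc j a b) = (a, b)} \<union>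
        {(a, b). a < m1 \<and> b < m2 \<and> error_event K enc dec a b}"
  proof
    fix p assume "p \<in> {..<m1} \<times> {..<m2}"
    then obtain a b where p: "p = (a, b)" "a < m1" "b < m2" by auto
    show "p \<in> {(a, b). a < m1 \<and> b < m2 \<and> dec j (rx_out K enc j a b) = (a, b)} \<union>
        {(a, b). a < m1 \<and> b < m2 \<and> error_event K enc dec a b}"
    proof (cases "dec j (rx_out K enc j a b) = (a, b)")
      case True then show ?thesis using p by simp
    next
      case False then have "error_event K enc dec a b" unfolding error_event_def using j by blast
      then show ?thesis using p by simp
    qed
  qed
qed

lemma errprob_K:
  assumes v: "valid_encoder K C n m1 m2 enc" and m: "m1 > 0" "m2 > 0"
  shows "error_prob K m1 m2 enc dec \<ge> 1 - real (m1 * Qs (blk_alph C n) (W K K)) / (real m1 * real m2)"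
  unfolding error_prob_def
proof (rule err_lower[OF _ card_correct_K[OF v] m])
  show "finite {(a, b). a < m1 \<and> b < m2 \<and> error_event K enc dec a b}"
    by (rule finite_subset[of _ "{..<m1} \<times> {..<m2}"]) auto
  show "finite {(a, b). a < m1 \<and> b < m2 \<and> snd (dec K (rx_out K enc K a b)) = b}"
    by (rule finite_subset[of _ "{..<m1} \<times> {..<m2}"]) auto
  show "{..<m1} \<times> {..<m2} \<subseteq> {(a, b). a < m1 \<and> b < m2 \<and> snd (dec K (rx_out K enc K a b)) = b} \<union>
        {(a, b). a < m1 \<and> b < m2 \<and> error_event K enc dec a b}"
  proof
    fix p assume "p \<in> {..<m1} \<times> {..<m2}"
    then obtain a b where p: "p = (a, b)" "a < m1" "b < m2" by auto
    show "p \<in> {(a, b). a < m1 \<and> b < m2 \<and> snd (dec K (rx_out K enc K a b)) = b} \<union>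
        {(a, b). a < m1 \<and> b < m2 \<and> error_event K enc dec a b}"
    proof (cases "snd (dec K (rx_out K enc K a b)) = b")
      case True then show ?thesis using p by simp
    next
      case False then have "error_event K enc dec a b" unfolding error_event_def by blast
      then show ?thesis using p by simp
    qed
  qed
qed




lemma lim_contra:
  fixes Pe :: "nat \<Rightarrow> real"
  assumes "Pe \<longlonglongrightarrow> 0" "\<And>n. 1 - 2 powr (real n * d) \<le> Pe n" "d < 0"
  shows False
proof -
  have e: "2 powr (real n * d) = (2 powr d) ^ n" for n by (simp add: powr_power)
  have "(\<lambda>n. (2 powr d) ^ n) \<longlonglongrightarrow> 0"
  proof (rule LIMSEQ_power_zero)
    have "2 powr d < 2 powr 0" using assms(3) by (intro powr_less_mono) auto
    then show "norm (2 powr d) < 1" by simp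
  qed
  then have "(\<lambda>n. 1 - 2 powr (real n * d)) \<longlonglongrightarrow> 1 - 0" unfolding e by (intro tendsto_diff) auto
  then have "1 - 0 \<le> (0::real)" using assms(1) by (rule LIMSEQ_le) (use assms(2) in auto)
  then show False by simp
qed

lemma converse:
  assumes hC: "\<forall>S\<in>links K. C S \<ge> 0 \<and> 2 powr C S \<in> \<nat>" and ach: "achievable K C (R1, R2)"
  shows "R2 \<le> capW C (W K K)" "\<forall>j\<in>{1..<K}. R2 + R1 \<le> capW C (W K j)"
proof -
  obtain Pe where Pe: "Pe \<longlonglongrightarrow> 0" and codes: "\<And>n. \<exists>enc dec. valid_encoder K C n (msg_size n R1) (msg_size n R2) enc \<and>
      error_prob K (msg_size n R1) (msg_size n R2) enc dec \<le> Pe n"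
    using ach unfolding achievable_def by auto
  have nn: "R1 \<ge> 0" "R2 \<ge> 0" using ach unfolding achievable_def by auto
  have mpos: "msg_size n R > 0" for n R using ms_ge1[of n R] by simp
  have mprod: "2 powr (real n * (R1 + R2)) \<le> real (msg_size n R1) * real (msg_size n R2)" for n
  proof -
    have "2 powr (real n * (R1 + R2)) = 2 powr (real n * R1) * 2 powr (real n * R2)" by (simp add: distrib_left powr_add)
    also have "\<dots> \<le> real (msg_size n R1) * real (msg_size n R2)" by (intro mult_mono ms_lower) auto
    finally show ?thesis .
  qed
  show "R2 \<le> capW C (W K K)"
  proof (rule ccontr)
    assume "\<not> ?thesis"
    then have d: "capW C (W K K) - R2 < 0" by simp
    show False
    proof (rule lim_contra[OF Pe _ d])
      fix n
      obtain enc dec where v: "valid_encoder K C n (msg_size n R1) (msg_size n R2) enc"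
        and le: "error_prob K (msg_size n R1) (msg_size n R2) enc dec \<le> Pe n" using codes[of n] by blast
      have "1 - real (msg_size n R1 * Qs (blk_alph C n) (W K K)) / (real (msg_size n R1) * real (msg_size n R2))
          \<le> error_prob K (msg_size n R1) (msg_size n R2) enc dec"
        by (rule errprob_K[OF v mpos mpos])
      also have "real (msg_size n R1 * Qs (blk_alph C n) (W K K)) / (real (msg_size n R1) * real (msg_size n R2))
          = 2 powr (real n * capW C (W K K)) / real (msg_size n R2)"
      proof -
        have "real (Qs (blk_alph C n) (W K K)) = 2 powr (real n * capW C (W K K))" by (rule Q_real[OF hC W_links])
        then show ?thesis using mpos[of n R1] by simp
      qed
      finally have a: "1 - 2 powr (real n * capW C (W K K)) / real (msg_size n R2) \<le> Pe n" using le by simp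
      have "2 powr (real n * capW C (W K K)) / real (msg_size n R2) \<le> 2 powr (real n * capW C (W K K)) / 2 powr (real n * R2)"
        using mpos[of n R2] by (intro divide_left_mono ms_lower) auto
      also have "\<dots> = 2 powr (real n * (capW C (W K K) - R2))" by (simp add: powr_diff[symmetric] right_diff_distrib)
      finally show "1 - 2 powr (real n * (capW C (W K K) - R2)) \<le> Pe n" using a by simp
    qed
  qed
  show "\<forall>j\<in>{1..<K}. R2 + R1 \<le> capW C (W K j)"
  proof
    fix j assume j: "j \<in> {1..<K}"
    show "R2 + R1 \<le> capW C (W K j)"
    proof (rule ccontr)
      assume "\<not> ?thesis"
      then have d: "capW C (W K j) - (R1 + R2) < 0" by simp
      show False
      proof (rule lim_contra[OF Pe _ d])
        fix n
        obtain enc dec where v: "valid_encoder K C n (msg_size n R1) (msg_size n R2) enc"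
          and le: "error_prob K (msg_size n R1) (msg_size n R2) enc dec \<le> Pe n" using codes[of n] by blast
        have "1 - real (Qs (blk_alph C n) (W K j)) / (real (msg_size n R1) * real (msg_size n R2))
            \<le> error_prob K (msg_size n R1) (msg_size n R2) enc dec"
          by (rule errprob_j[OF v j mpos mpos])
        then have a: "1 - 2 powr (real n * capW C (W K j)) / (real (msg_size n R1) * real (msg_size n R2)) \<le> Pe n"
        proof -
          have "real (Qs (blk_alph C n) (W K j)) = 2 powr (real n * capW C (W K j))" by (rule Q_real[OF hC W_links])
          then show ?thesis using le \<open>1 - real (Qs (blk_alph C n) (W K j)) / (real (msg_size n R1) * real (msg_size n R2))
            \<le> error_prob K (msg_size n R1) (msg_size n R2) enc dec\<close> by simp
        qed
        have "2 powr (real n * capW C (W K j)) / (real (msg_size n R1) * real (msg_size n R2))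
            \<le> 2 powr (real n * capW C (W K j)) / 2 powr (real n * (R1 + R2))"
          using mpos[of n R2] mpos[of n R1] by (intro divide_left_mono mprod) auto
        also have "\<dots> = 2 powr (real n * (capW C (W K j) - (R1 + R2)))" by (simp add: powr_diff[symmetric] right_diff_distrib)
        finally show "1 - 2 powr (real n * (capW C (W K j) - (R1 + R2))) \<le> Pe n" using a by simp
      qed
    qed
  qed
qed


theorem proposition2:
  fixes K :: nat and C :: "nat set \<Rightarrow> real"
  assumes "K \<ge> 2"
    and "\<forall>S\<in>links K. C S \<ge> 0 \<and> 2 powr C S \<in> \<nat>"
  shows "capacity_region K C =
    {(RKbar, RK). RKbar \<ge> 0 \<and> RK \<ge> 0 \<and> RK \<le> capW C (W K K) \<and>
       (\<forall>j\<in>{1..<K}. RK + RKbar \<le> capW C (W K j))}"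
proof -
  let ?P = "{(RKbar, RK). RKbar \<ge> 0 \<and> RK \<ge> 0 \<and> RK \<le> capW C (W K K) \<and>
       (\<forall>j\<in>{1..<K}. RK + RKbar \<le> capW C (W K j))}"
  have PE: "?P = {p. 0 \<le> fst p} \<inter> {p. 0 \<le> snd p} \<inter> {p. snd p \<le> capW C (W K K)} \<inter>
      (\<Inter>j\<in>{1..<K}. {p. snd p + fst p \<le> capW C (W K j)})" by auto
  have closedP: "closed ?P" unfolding PE
    by (intro closed_Int closed_INT ballI closed_Collect_le continuous_intros)
  have AP: "{R. achievable K C R} \<subseteq> ?P"
  proof
    fix R assume "R \<in> {R. achievable K C R}"
    then have a: "achievable K C (fst R, snd R)" by simp
    show "R \<in> ?P" using converse[OF assms(2) a] a unfolding achievable_def by (cases R) auto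
  qed
  have PA: "?P \<subseteq> closure {R. achievable K C R}"
  proof
    fix p assume p: "p \<in> ?P"
    obtain x y where pe: "p = (x, y)" by fastforce
    have x: "x \<ge> 0" and y: "y \<ge> 0" and yK: "y \<le> capW C (W K K)"
      and xy: "\<forall>j\<in>{1..<K}. y + x \<le> capW C (W K j)" using p pe by auto
    define t where "t = (\<lambda>n::nat. 1 - inverse (real (Suc n)))"
    have t0: "0 \<le> t n" and t1: "t n < 1" for n unfolding t_def by (auto simp: field_simps)
    have tl: "t \<longlonglongrightarrow> 1"
    proof -
      have "(\<lambda>n. 1 - inverse (real (Suc n))) \<longlonglongrightarrow> 1 - 0"
        by (intro tendsto_diff tendsto_const LIMSEQ_inverse_real_of_nat)
      then show ?thesis unfolding t_def by simp
    qed
    have mem: "(t n * x, t n * y) \<in> {R. achievable K C R}" for n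
    proof -
      have "achievable K C (t n * x, t n * y)"
      proof (rule achievable_inner[OF assms(1,2)])
        show "0 \<le> t n * x" "0 \<le> t n * y" using t0 x y by auto
        show "0 \<le> t n" "t n < 1" by (rule t0, rule t1)
        show "t n * y \<le> t n * capW C (W K K)" using yK t0 by (rule mult_left_mono)
        show "\<forall>j\<in>{1..<K}. t n * x + t n * y \<le> t n * capW C (W K j)"
        proof
          fix j assume "j \<in> {1..<K}"
          then have "y + x \<le> capW C (W K j)" using xy by blast
          then have "t n * (y + x) \<le> t n * capW C (W K j)" using t0 by (rule mult_left_mono)
          then show "t n * x + t n * y \<le> t n * capW C (W K j)" by (simp add: algebra_simps)
        qed
      qed
      then show ?thesis by simp
    qed
    have "(\<lambda>n. (t n * x, t n * y)) \<longlonglongrightarrow> (1 * x, 1 * y)"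
      by (intro tendsto_Pair tendsto_mult tl tendsto_const)
    then have "(\<lambda>n. (t n * x, t n * y)) \<longlonglongrightarrow> p" using pe by simp
    then show "p \<in> closure {R. achievable K C R}" unfolding closure_sequential
      using mem by (intro exI[of _ "\<lambda>n. (t n * x, t n * y)"]) simp
  qed
  show ?thesis unfolding capacity_region_def
  proof (rule antisym)
    show "closure {R. achievable K C R} \<subseteq> ?P" by (rule closure_minimal[OF AP closedP])
    show "?P \<subseteq> closure {R. achievable K C R}" by (rule PA)
  qed
qed


end
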